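(* Let $x=(x_k)_{k\in\mathbb{Z}}$ be a sequence with $x_k\in\{-1,0,1,2,\dots\}$ for all $k$, and let $T$ be its record graph. Let $i\in\mathbb{Z}$ satisfy $L_x(i)>-\infty$. Then: \begin{enumerate} \item the number of children of $i$ in $T$ is $d_1(i)=x_{i-1}+1$; \item if $d_1(i)=n>0$ and $i_n<i_{n-1}<\dots<i_1$ are the children of $i$, then for each $m$, $m=x_{i-1}+1-y(i_m,i)$; \item if $d_1(i)=n>0$ and $m\in\{1,\dots,n\}$, then an integer $i'<i$ is the $m$-th child $i_m$ of $i$ if and only if $i'$ is the largest integer in $\{L_x(i),\dots,i-1\}$ satisfying $y(i',i)=x_{i-1}+1-m$. \end{enumerate}
   Context: Write $y(j,k)=\sum_{l=j}^{k-1}x_l$ for $j<k$. The record map is $R_x(i)=\inf\{n>i: y(i,n)\ge0\}$ if this set is nonempty, and $R_x(i)=i$ otherwise; the record graph has vertex set $\mathbb{Z}$ and directed edges $i\to R_x(i)$ for $R_x(i)\ne i$; the children of $i$ are the $j\ne i$ with $R_x(j)=i$. Define $L_x(i)=\inf\{j<i: y(k,i)\ge0\text{ for all }j\le k<i\}\in\mathbb{Z}\cup\{-\infty\}$ if this set is nonempty, and $L_x(i)=i$ otherwise. *)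

theory Defs
  imports Main "HOL-Library.Extended_Real"
begin

definition ysum :: "(int \<Rightarrow> int) \<Rightarrow> int \<Rightarrow> int \<Rightarrow> int" where
  "ysum x j k = (\<Sum>l\<in>{j..<k}. x l)"

definition record_map :: "(int \<Rightarrow> int) \<Rightarrow> int \<Rightarrow> int" where
  "record_map x i = (if \<exists>n>i. ysum x i n \<ge> 0
                      then (LEAST n. n > i \<and> ysum x i n \<ge> 0) else i)"

definition children :: "(int \<Rightarrow> int) \<Rightarrow> int \<Rightarrow> int set" where
  "children x i = {j. j \<noteq> i \<and> record_map x j = i}"

text \<open>Children listed in decreasing order: i_1 > i_2 > ... > i_n; i_m is the entry at index m-1.\<close>
definition child_list :: "(int \<Rightarrow> int) \<Rightarrow> int \<Rightarrow> int list" where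
  "child_list x i = rev (sorted_list_of_set (children x i))"

text \<open>L_x(i) \<in> \<int> \<union> {-\<infinity>}, valued in the extended reals.\<close>
definition Lset :: "(int \<Rightarrow> int) \<Rightarrow> int \<Rightarrow> int set" where
  "Lset x i = {j. j < i \<and> (\<forall>k. j \<le> k \<and> k < i \<longrightarrow> ysum x k i \<ge> 0)}"

definition Lx :: "(int \<Rightarrow> int) \<Rightarrow> int \<Rightarrow> ereal" where
  "Lx x i = (if Lset x i = {} then ereal (real_of_int i)
             else Inf ((\<lambda>j. ereal (real_of_int j)) ` Lset x i))"

end

theory Submission
  imports Defs
begin

lemma ysum_same[simp]: "ysum x k k = 0"
  by (simp add: ysum_def)

lemma ysum_split:
  assumes "j \<le> n" "n \<le> k"
  shows "ysum x j k = ysum x j n + ysum x n k"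
proof -
  have "{j..<k} = {j..<n} \<union> {n..<k}" using assms by auto
  then show ?thesis unfolding ysum_def
    by (simp add: sum.union_disjoint ivl_disj_int_two(3))
qed

lemma ysum_step:
  assumes "j < k"
  shows "ysum x j k = x j + ysum x (j+1) k"
proof -
  have "ysum x j k = ysum x j (j+1) + ysum x (j+1) k"
    using assms by (intro ysum_split) auto
  moreover have "{j..<j+1} = {j}" by auto
  then have "ysum x j (j+1) = x j" unfolding ysum_def by simp
  ultimately show ?thesis by simp
qed

lemma rm_least:
  assumes "\<exists>n>j. ysum x j n \<ge> 0"
  shows "record_map x j > j \<and> ysum x j (record_map x j) \<ge> 0
     \<and> (\<forall>n>j. ysum x j n \<ge> 0 \<longrightarrow> record_map x j \<le> n)"
proof -
  obtain n0 where n0: "n0 > j" "ysum x j n0 \<ge> 0" using assms by blast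
  define S where "S = {n. j < n \<and> n \<le> n0 \<and> ysum x j n \<ge> 0}"
  have fin: "finite S" unfolding S_def by (rule finite_subset[of _ "{j..n0}"]) auto
  have ne: "n0 \<in> S" using n0 unfolding S_def by auto
  define m where "m = Min S"
  have mS: "m \<in> S" using fin ne m_def Min_in by blast
  have mle: "\<And>n. n > j \<Longrightarrow> ysum x j n \<ge> 0 \<Longrightarrow> m \<le> n"
  proof -
    fix n assume "n > j" "ysum x j n \<ge> 0"
    show "m \<le> n"
    proof (cases "n \<le> n0")
      case True then have "n \<in> S" using \<open>n > j\<close> \<open>ysum x j n \<ge> 0\<close> S_def by auto
      then show ?thesis using fin m_def by auto
    next
      case False then show ?thesis using mS S_def by auto
    qed
  qed
  have "(LEAST n. n > j \<and> ysum x j n \<ge> 0) = m"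
    by (rule Least_equality) (use mS S_def mle in auto)
  then have "record_map x j = m" using assms by (simp add: record_map_def)
  then show ?thesis using mS S_def mle by auto
qed

lemma rm_ge: "record_map x j \<ge> j"
  using rm_least[of j x] by (cases "\<exists>n>j. ysum x j n \<ge> 0") (auto simp: record_map_def)

lemma rm_eq:
  assumes "j < i"
  shows "record_map x j = i \<longleftrightarrow> ysum x j i \<ge> 0 \<and> (\<forall>n. j < n \<and> n < i \<longrightarrow> ysum x j n < 0)"
proof
  assume h: "record_map x j = i"
  then have ex: "\<exists>n>j. ysum x j n \<ge> 0" using assms by (auto simp: record_map_def split: if_splits)
  show "ysum x j i \<ge> 0 \<and> (\<forall>n. j < n \<and> n < i \<longrightarrow> ysum x j n < 0)"
    using rm_least[OF ex] h by force
next
  assume h: "ysum x j i \<ge> 0 \<and> (\<forall>n. j < n \<and> n < i \<longrightarrow> ysum x j n < 0)"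
  then have ex: "\<exists>n>j. ysum x j n \<ge> 0" using assms by auto
  have "(LEAST n. n > j \<and> ysum x j n \<ge> 0) = i"
    by (rule Least_equality) (use h assms in force)+
  then show "record_map x j = i" using ex by (simp add: record_map_def)
qed

lemma children_char:
  "children x i = {j. j < i \<and> 0 \<le> ysum x j i \<and> (\<forall>n. j < n \<and> n < i \<longrightarrow> ysum x j i < ysum x n i)}"
proof -
  have "\<And>j. j \<in> children x i \<longleftrightarrow> j < i \<and> record_map x j = i"
    unfolding children_def using rm_ge[of j x for j]
    by (auto, metis order_le_neq_trans)
  moreover have "\<And>j n. j < n \<Longrightarrow> n < i \<Longrightarrow> ysum x j n = ysum x j i - ysum x n i"
  proof -
    fix j n :: int assume "j < n" "n < i"
    then show "ysum x j n = ysum x j i - ysum x n i" using ysum_split[of j n i x] by simp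
  qed
  ultimately show ?thesis using rm_eq by fastforce
qed

lemma ivt:
  fixes g :: "int \<Rightarrow> int"
  assumes "p \<le> q" "g p \<le> v" "v \<le> g q" "\<And>k. p \<le> k \<Longrightarrow> k < q \<Longrightarrow> g (k+1) \<le> g k + 1"
  shows "\<exists>j. p \<le> j \<and> j \<le> q \<and> g j = v"
proof -
  define S where "S = {j. p \<le> j \<and> j \<le> q \<and> g j \<le> v}"
  have fin: "finite S" unfolding S_def by (rule finite_subset[of _ "{p..q}"]) auto
  have pS: "p \<in> S" using assms S_def by auto
  define j0 where "j0 = Max S"
  have j0S: "j0 \<in> S" using fin pS j0_def Max_in by blast
  show ?thesis
  proof (cases "j0 = q")
    case True then show ?thesis using j0S S_def assms by auto
  next
    case False
    then have "j0 < q" using j0S S_def by auto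
    have "j0 + 1 \<notin> S" using fin j0_def by (metis Max_ge less_add_one not_le)
    then have "g (j0+1) > v" using \<open>j0 < q\<close> j0S S_def by auto
    moreover have "g (j0+1) \<le> g j0 + 1" using assms(4) j0S S_def \<open>j0 < q\<close> by auto
    ultimately show ?thesis using j0S S_def by (intro exI[of _ j0]) auto
  qed
qed

theorem lemma4p2:
  fixes x :: "int \<Rightarrow> int" and i :: int
  assumes hx: "\<And>k. x k \<ge> -1"
    and hL: "Lx x i > -\<infinity>"
  shows "(finite (children x i) \<and> int (card (children x i)) = x (i - 1) + 1)
    \<and> (\<forall>n m. n = card (children x i) \<and> n > 0 \<and> m \<in> {1..n} \<longrightarrow>
           int m = x (i - 1) + 1 - ysum x (child_list x i ! (m - 1)) i)
    \<and> (\<forall>n m i'. n = card (children x i) \<and> n > 0 \<and> m \<in> {1..n} \<and> i' < i \<longrightarrow>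
           (i' = child_list x i ! (m - 1) \<longleftrightarrow>
              (Lx x i \<le> ereal (real_of_int i') \<and> i' \<le> i - 1
               \<and> ysum x i' i = x (i - 1) + 1 - int m
               \<and> (\<forall>j. Lx x i \<le> ereal (real_of_int j) \<and> j \<le> i - 1
                      \<and> ysum x j i = x (i - 1) + 1 - int m \<longrightarrow> j \<le> i'))))"
proof -
  define f where "f = (\<lambda>j. ysum x j i)"
  have fstep: "\<And>j. j < i \<Longrightarrow> f j = x j + f (j+1)" unfolding f_def by (rule ysum_step)
  have fi: "f i = 0" unfolding f_def by simp
  have fa: "f (i-1) = x (i-1)" using fstep[of "i-1"] fi by simp
  have finc: "\<And>k. k < i \<Longrightarrow> f (k+1) \<le> f k + 1"
  proof -
    fix k :: int assume "k < i"
    then show "f (k+1) \<le> f k + 1" using fstep[of k] hx[of k] by simp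
  qed
  have ch: "children x i = {j. j < i \<and> 0 \<le> f j \<and> (\<forall>n. j < n \<and> n < i \<longrightarrow> f j < f n)}"
    unfolding f_def by (rule children_char)
  have Lset_f: "\<And>j. j \<in> Lset x i \<longleftrightarrow> j < i \<and> (\<forall>k. j \<le> k \<and> k < i \<longrightarrow> 0 \<le> f k)"
    unfolding Lset_def f_def by auto
  show ?thesis
  proof (cases "Lset x i = {}")
    case True
    then have "i - 1 \<notin> Lset x i" by auto
    then obtain k where "i - 1 \<le> k" "k < i" "f k < 0" using Lset_f by force
    then have "k = i - 1" by auto
    then have xm: "x (i-1) = -1" using \<open>f k < 0\<close> fa hx[of "i-1"] by simp
    have "children x i = {}"
    proof (rule ccontr)
      assume "children x i \<noteq> {}"
      then obtain j where j: "j < i" "0 \<le> f j" "\<forall>n. j < n \<and> n < i \<longrightarrow> f j < f n"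
        using ch by auto
      show False
      proof (cases "j = i - 1")
        case True then show ?thesis using j fa xm by simp
      next
        case False then have "f j < f (i-1)" using j by auto
        then show ?thesis using j fa xm by simp
      qed
    qed
    then show ?thesis using xm by simp
  next
    case False
    then obtain j0 where j0: "j0 \<in> Lset x i" by auto
    have LxInf: "Lx x i = Inf ((\<lambda>j. ereal (real_of_int j)) ` Lset x i)"
      using False by (simp add: Lx_def)
    have "Lx x i \<le> ereal (real_of_int j0)" unfolding LxInf using j0 by (auto intro: Inf_lower)
    then obtain r where r: "Lx x i = ereal r" using hL by (cases "Lx x i") auto
    have rle: "\<And>j. j \<in> Lset x i \<Longrightarrow> r \<le> real_of_int j"
    proof -
      fix j assume "j \<in> Lset x i"
      then have "Lx x i \<le> ereal (real_of_int j)" unfolding LxInf by (auto intro: Inf_lower)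
      then show "r \<le> real_of_int j" using r by simp
    qed
    have finL: "finite (Lset x i)"
    proof (rule finite_subset[of _ "{\<lfloor>r\<rfloor>..i}"])
      show "Lset x i \<subseteq> {\<lfloor>r\<rfloor>..i}"
      proof
        fix j assume jL: "j \<in> Lset x i"
        then have "r \<le> real_of_int j" by (rule rle)
        then have "\<lfloor>r\<rfloor> \<le> j" by linarith
        moreover have "j < i" using jL Lset_f by auto
        ultimately show "j \<in> {\<lfloor>r\<rfloor>..i}" by auto
      qed
    qed auto
    define L where "L = Min (Lset x i)"
    have LL: "L \<in> Lset x i" using finL False L_def Min_in by blast
    have Lmin: "\<And>j. j \<in> Lset x i \<Longrightarrow> L \<le> j" using finL L_def by auto
    have LxL: "Lx x i = ereal (real_of_int L)"
    proof (rule antisym)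
      show "Lx x i \<le> ereal (real_of_int L)" unfolding LxInf using LL by (auto intro: Inf_lower)
      show "ereal (real_of_int L) \<le> Lx x i" unfolding LxInf using Lmin by (auto intro!: Inf_greatest)
    qed
    have hLe: "\<And>j. Lx x i \<le> ereal (real_of_int j) \<longleftrightarrow> L \<le> j" using LxL by simp
    have Li: "L \<le> i - 1" using LL Lset_f by auto
    have fpos: "\<And>k. L \<le> k \<Longrightarrow> k < i \<Longrightarrow> 0 \<le> f k" using LL Lset_f by auto
    have "L - 1 \<notin> Lset x i" using Lmin by fastforce
    then obtain k where k: "L - 1 \<le> k" "k < i" "f k < 0" using Lset_f Li by force
    have "k = L - 1"
    proof (rule ccontr)
      assume "k \<noteq> L - 1"
      then have "L \<le> k" using k by simp
      then show False using fpos[of k] k by simp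
    qed
    then have fL: "f L = 0" using k fstep[of "L-1"] hx[of "L-1"] fpos[of L] Li by simp
    define a where "a = x (i - 1)"
    have a0: "0 \<le> a" using fpos[of "i-1"] Li fa a_def by simp
    have faa: "f (i-1) = a" using fa a_def by simp
    have chL: "\<And>j. j \<in> children x i \<longleftrightarrow> L \<le> j \<and> j \<le> i - 1 \<and> f j \<le> a
                 \<and> (\<forall>k. j < k \<and> k \<le> i - 1 \<longrightarrow> f k \<noteq> f j)"
    proof -
      fix j
      show "j \<in> children x i \<longleftrightarrow> L \<le> j \<and> j \<le> i - 1 \<and> f j \<le> a
                 \<and> (\<forall>k. j < k \<and> k \<le> i - 1 \<longrightarrow> f k \<noteq> f j)"
      proof
        assume "j \<in> children x i"
        then have j: "j < i" "0 \<le> f j" "\<forall>n. j < n \<and> n < i \<longrightarrow> f j < f n" using ch by auto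
        have "j \<in> Lset x i" unfolding Lset_f
        proof (intro conjI allI impI)
          fix k assume "j \<le> k \<and> k < i"
          then show "0 \<le> f k" using j by (cases "k = j") force+
        qed (use j in auto)
        then have "L \<le> j" by (rule Lmin)
        moreover have "f j \<le> a"
        proof (cases "j = i - 1")
          case True then show ?thesis using faa by simp
        next
          case False then have "f j < f (i-1)" using j by simp
          then show ?thesis using faa by simp
        qed
        ultimately show "L \<le> j \<and> j \<le> i - 1 \<and> f j \<le> a
                 \<and> (\<forall>k. j < k \<and> k \<le> i - 1 \<longrightarrow> f k \<noteq> f j)" using j by force
      next
        assume h: "L \<le> j \<and> j \<le> i - 1 \<and> f j \<le> a
                 \<and> (\<forall>k. j < k \<and> k \<le> i - 1 \<longrightarrow> f k \<noteq> f j)"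
        have "\<forall>n. j < n \<and> n < i \<longrightarrow> f j < f n"
        proof (intro allI impI, rule ccontr)
          fix n assume n: "j < n \<and> n < i" "\<not> f j < f n"
          have "\<exists>k. n \<le> k \<and> k \<le> i - 1 \<and> f k = f j"
            by (rule ivt) (use n h faa finc in auto)
          then show False using h n by force
        qed
        then show "j \<in> children x i" using ch h fpos by auto
      qed
    qed
    define c where "c = (\<lambda>v. Max {j. L \<le> j \<and> j \<le> i - 1 \<and> f j = v})"
    have cprop: "L \<le> c v \<and> c v \<le> i - 1 \<and> f (c v) = v
        \<and> (\<forall>j. L \<le> j \<and> j \<le> i - 1 \<and> f j = v \<longrightarrow> j \<le> c v)" if v: "0 \<le> v" "v \<le> a" for v
    proof -
      let ?S = "{j. L \<le> j \<and> j \<le> i - 1 \<and> f j = v}"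
      have fin: "finite ?S" by (rule finite_subset[of _ "{L..i}"]) auto
      have "\<exists>j. L \<le> j \<and> j \<le> i - 1 \<and> f j = v"
        by (rule ivt) (use v Li fL faa finc in auto)
      then have ne: "?S \<noteq> {}" by auto
      have "c v \<in> ?S" unfolding c_def using Max_in[OF fin ne] .
      moreover have "\<forall>j\<in>?S. j \<le> c v" unfolding c_def using fin by auto
      ultimately show ?thesis by auto
    qed
    have cch: "c v \<in> children x i" if v: "0 \<le> v" "v \<le> a" for v
    proof -
      have cp: "L \<le> c v" "c v \<le> i - 1" "f (c v) = v"
        "\<And>j. L \<le> j \<Longrightarrow> j \<le> i - 1 \<Longrightarrow> f j = v \<Longrightarrow> j \<le> c v"
        using cprop[OF v] by auto
      have "\<forall>k. c v < k \<and> k \<le> i - 1 \<longrightarrow> f k \<noteq> f (c v)"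
      proof (intro allI impI)
        fix k assume k: "c v < k \<and> k \<le> i - 1"
        show "f k \<noteq> f (c v)"
        proof
          assume "f k = f (c v)"
          then have "k \<le> c v" using cp k by auto
          then show False using k by simp
        qed
      qed
      then show ?thesis unfolding chL using cp v by simp
    qed
    have chc: "children x i = c ` {0..a}"
    proof
      show "c ` {0..a} \<subseteq> children x i" using cch by auto
      show "children x i \<subseteq> c ` {0..a}"
      proof
        fix j assume jc: "j \<in> children x i"
        then have j: "L \<le> j" "j \<le> i - 1" "f j \<le> a" "\<forall>k. j < k \<and> k \<le> i - 1 \<longrightarrow> f k \<noteq> f j"
          using chL by auto
        have v: "0 \<le> f j" "f j \<le> a" using j fpos by auto
        have "j \<le> c (f j)" using cprop[OF v] j by auto
        moreover have "\<not> j < c (f j)" using cprop[OF v] j by auto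
        ultimately have "j = c (f j)" by auto
        then show "j \<in> c ` {0..a}" using v by auto
      qed
    qed
    have cmono: "c v < c w" if vw: "0 \<le> v" "v < w" "w \<le> a" for v w
    proof (rule ccontr)
      assume "\<not> c v < c w"
      moreover have "c v \<noteq> c w" using cprop[of v] cprop[of w] vw by auto
      ultimately have "c w < c v" by auto
      moreover have "c w \<in> children x i" using cch vw by auto
      ultimately have "f (c w) < f (c v)" using ch cprop[of v] vw by auto
      then show False using cprop[of v] cprop[of w] vw by auto
    qed
    define xs where "xs = map (\<lambda>k. c (int k)) [0..<nat a + 1]"
    have sxs: "sorted_wrt (<) xs" unfolding sorted_wrt_iff_nth_less
    proof (intro allI impI)
      fix p q assume pq: "p < q" "q < length xs"
      then have "q \<le> nat a" unfolding xs_def by simp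
      then have "c (int p) < c (int q)" using pq a0 by (intro cmono) auto
      then show "xs ! p < xs ! q" unfolding xs_def using pq \<open>q \<le> nat a\<close>
        by (simp del: upt_Suc add: nth_upt)
    qed
    have setxs: "set xs = children x i"
    proof -
      have "int ` {0..<nat a + 1} = {0..a}" using a0
        by (auto simp: image_iff intro!: bexI[of _ "nat _"])
      moreover have "set xs = c ` int ` {0..<nat a + 1}" unfolding xs_def
        by (simp only: set_map set_upt image_image)
      ultimately show ?thesis unfolding chc by simp
    qed
    have finC: "finite (children x i)" unfolding chc by simp
    have lenxs: "length xs = nat a + 1" unfolding xs_def by simp
    have cardC: "card (children x i) = nat a + 1"
      using setxs sxs lenxs by (metis distinct_card strict_sorted_iff)
    have slist: "sorted_list_of_set (children x i) = xs"
      using sorted_list_of_set_unique[OF finC, of xs] sxs setxs cardC lenxs by simp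
    have clist: "child_list x i ! (m - 1) = c (a + 1 - int m)" if m: "1 \<le> m" "m \<le> nat a + 1" for m
    proof -
      have "child_list x i ! (m - 1) = xs ! (length xs - Suc (m - 1))"
        unfolding child_list_def slist using m lenxs by (simp add: rev_nth)
      also have "\<dots> = xs ! (nat a + 1 - m)" using m lenxs by simp
      also have "\<dots> = c (int (nat a + 1 - m))" unfolding xs_def using m
        by (simp del: upt_Suc)
      also have "int (nat a + 1 - m) = a + 1 - int m" using m a0 by simp
      finally show ?thesis .
    qed
    show ?thesis
    proof (intro conjI allI impI)
      show "finite (children x i)" by (rule finC)
      show "int (card (children x i)) = x (i - 1) + 1" using cardC a0 a_def by simp
    next
      fix n m assume h: "n = card (children x i) \<and> 0 < n \<and> m \<in> {1..n}"
      then have m: "1 \<le> m" "m \<le> nat a + 1" using cardC by auto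
      have "f (c (a + 1 - int m)) = a + 1 - int m" using cprop[of "a + 1 - int m"] m a0 by auto
      then show "int m = x (i - 1) + 1 - ysum x (child_list x i ! (m - 1)) i"
        using clist[OF m] a_def f_def by simp
    next
      fix n m i' assume h: "n = card (children x i) \<and> 0 < n \<and> m \<in> {1..n} \<and> i' < i"
      then have m: "1 \<le> m" "m \<le> nat a + 1" using cardC by auto
      define w where "w = a + 1 - int m"
      have w: "0 \<le> w" "w \<le> a" using m a0 w_def by auto
      have cw: "child_list x i ! (m - 1) = c w" using clist[OF m] w_def by simp
      have e: "x (i - 1) + 1 - int m = w" using w_def a_def by simp
      have fe: "\<And>j. ysum x j i = f j" using f_def by simp
      show "(i' = child_list x i ! (m - 1)) =
        (Lx x i \<le> ereal (real_of_int i') \<and> i' \<le> i - 1 \<and> ysum x i' i = x (i - 1) + 1 - int m \<and>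
         (\<forall>j. Lx x i \<le> ereal (real_of_int j) \<and> j \<le> i - 1 \<and> ysum x j i = x (i - 1) + 1 - int m \<longrightarrow>
              j \<le> i'))"
        unfolding cw e hLe fe
      proof
        assume "i' = c w"
        then show "L \<le> i' \<and> i' \<le> i - 1 \<and> f i' = w \<and> (\<forall>j. L \<le> j \<and> j \<le> i - 1 \<and> f j = w \<longrightarrow> j \<le> i')"
          using cprop[OF w] by auto
      next
        assume hh: "L \<le> i' \<and> i' \<le> i - 1 \<and> f i' = w \<and> (\<forall>j. L \<le> j \<and> j \<le> i - 1 \<and> f j = w \<longrightarrow> j \<le> i')"
        have c1: "L \<le> c w" "c w \<le> i - 1" "f (c w) = w"
          "\<And>j. L \<le> j \<Longrightarrow> j \<le> i - 1 \<Longrightarrow> f j = w \<Longrightarrow> j \<le> c w" using cprop[OF w] by auto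
        have "i' \<le> c w" using c1(4) hh by blast
        moreover have "c w \<le> i'" using hh c1(1-3) by blast
        ultimately show "i' = c w" by simp
      qed
    qed
  qed
qed

end
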